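(* Let $G$ be a small category and $X$ a set with a partial category action by $G$; let $Y$ with its global action by $G$ be as defined below, and let $i : X\to Y$ be given by $i(x) = [e,x]$ where $e\in{\rm ob}(G)$ is any object with $e\cdot x$ defined. Then $i$ is injective, and for all $y,z\in X$ and $g\in{\rm mor}(G)$: $g\cdot y$ is defined and equal to $z$ if and only if $g\cdot i(y)$ is defined and equal to $i(z)$.
   Context: Conventions: $G$ is a small category; objects are identified with their identity morphisms, so ${\rm ob}(G)\subseteq{\rm mor}(G)$; $d(g), c(g)$ are domain and codomain, $G^2=\{(g,h)\mid d(g)=c(h)\}$. A partial category action by $G$ on $X$ is a partial function ${\rm mor}(G)\times X\to X$, $(g,x)\mapsto g\cdot x$ where defined, such that: (C1) for every $x$ there is $e\in{\rm ob}(G)$ with $e\cdot x$ defined, and whenever $f\in{\rm ob}(G)$ and $f\cdot x$ is defined, $f\cdot x=x$; (C2) if $g\cdot x$ is defined then $d(g)\cdot x$ is defined; (C3) if $(g,h)\in G^2$ and $h\cdot x$ is defined, then $(gh)\cdot x$ is defined iff $g\cdot(h\cdot x)$ is defined, and then they are equal. Let $\overline{X} = \{(g,x)\in{\rm mor}(G)\times X\mid d(g)\cdot x\text{ defined}\}$. Define $(g,x)\sim(g',x')$ on $\overline{X}$ if either (i) there is $h\in{\rm mor}(G)$ with $(g',h)\in G^2$, $h\cdot x$ defined, $g=g'h$ and $x'=h\cdot x$; or (ii) $x=x'$, $g,g'\in{\rm ob}(G)$ and both $g\cdot x$ and $g'\cdot x'$ are defined. Let $\simeq$ be the equivalence relation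 generated by $\sim$, $Y = \overline{X}/\simeq$, and $[g,x]$ the class of $(g,x)$. The action on $Y$: $g\cdot[h,x]$ is defined iff there is $(h',x')\in\overline{X}$ with $(h,x)\simeq(h',x')$ and $(g,h')\in G^2$, and then $g\cdot[h,x]=[gh',x']$. (The map $i$ is well defined, i.e. independent of the choice of $e$.) *)

theory Defs
  imports Main
begin

text \<open>A small category: a set of morphisms, domain/codomain maps, and a composition
  (only meaningful on composable pairs). Objects are identified with identity morphisms.\<close>

record 'm category =
  Mor :: "'m set"
  Dom :: "'m \<Rightarrow> 'm"
  Cod :: "'m \<Rightarrow> 'm"
  Comp :: "'m \<Rightarrow> 'm \<Rightarrow> 'm"

definition Ob :: "('m, 'e) category_scheme \<Rightarrow> 'm set" where
  "Ob G = Dom G ` Mor G"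

definition composable :: "('m, 'e) category_scheme \<Rightarrow> 'm \<Rightarrow> 'm \<Rightarrow> bool" where
  "composable G g h \<longleftrightarrow> g \<in> Mor G \<and> h \<in> Mor G \<and> Dom G g = Cod G h"

definition is_category :: "('m, 'e) category_scheme \<Rightarrow> bool" where
  "is_category G \<longleftrightarrow>
     (\<forall>g\<in>Mor G. Dom G g \<in> Mor G \<and> Cod G g \<in> Mor G) \<and>
     (\<forall>g\<in>Mor G. Dom G (Dom G g) = Dom G g \<and> Cod G (Dom G g) = Dom G g \<and>
                 Dom G (Cod G g) = Cod G g \<and> Cod G (Cod G g) = Cod G g) \<and>
     (\<forall>g h. composable G g h \<longrightarrow> Comp G g h \<in> Mor G \<and>
              Dom G (Comp G g h) = Dom G h \<and> Cod G (Comp G g h) = Cod G g) \<and>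
     (\<forall>f g h. composable G f g \<and> composable G g h \<longrightarrow>
              Comp G (Comp G f g) h = Comp G f (Comp G g h)) \<and>
     (\<forall>g\<in>Mor G. Comp G g (Dom G g) = g \<and> Comp G (Cod G g) g = g)"

definition is_partial_action ::
  "('m, 'e) category_scheme \<Rightarrow> 'x set \<Rightarrow> ('m \<Rightarrow> 'x \<Rightarrow> 'x option) \<Rightarrow> bool" where
  "is_partial_action G X act \<longleftrightarrow>
     (\<forall>g x y. act g x = Some y \<longrightarrow> g \<in> Mor G \<and> x \<in> X \<and> y \<in> X) \<and>
     \<comment> \<open>(C1)\<close>
     (\<forall>x\<in>X. (\<exists>e\<in>Ob G. act e x \<noteq> None) \<and>
              (\<forall>f\<in>Ob G. act f x \<noteq> None \<longrightarrow> act f x = Some x)) \<and>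
     \<comment> \<open>(C2)\<close>
     (\<forall>g x. act g x \<noteq> None \<longrightarrow> act (Dom G g) x \<noteq> None) \<and>
     \<comment> \<open>(C3): (gh).x defined iff g.(h.x) defined, and then equal\<close>
     (\<forall>g h x y. composable G g h \<and> act h x = Some y \<longrightarrow>
              act (Comp G g h) x = act g y)"

definition Xbar ::
  "('m, 'e) category_scheme \<Rightarrow> 'x set \<Rightarrow> ('m \<Rightarrow> 'x \<Rightarrow> 'x option) \<Rightarrow> ('m \<times> 'x) set" where
  "Xbar G X act = {(g, x). g \<in> Mor G \<and> x \<in> X \<and> act (Dom G g) x \<noteq> None}"

definition sim_rel ::
  "('m, 'e) category_scheme \<Rightarrow> 'x set \<Rightarrow> ('m \<Rightarrow> 'x \<Rightarrow> 'x option) \<Rightarrow> (('m \<times> 'x) \<times> ('m \<times> 'x)) set" where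
  "sim_rel G X act = {((g, x), (g', x')).
      (g, x) \<in> Xbar G X act \<and> (g', x') \<in> Xbar G X act \<and>
      ((\<exists>h. composable G g' h \<and> act h x \<noteq> None \<and> g = Comp G g' h \<and> act h x = Some x') \<or>
       (x = x' \<and> g \<in> Ob G \<and> g' \<in> Ob G \<and> act g x \<noteq> None \<and> act g' x' \<noteq> None))}"

definition simeq ::
  "('m, 'e) category_scheme \<Rightarrow> 'x set \<Rightarrow> ('m \<Rightarrow> 'x \<Rightarrow> 'x option) \<Rightarrow> (('m \<times> 'x) \<times> ('m \<times> 'x)) set" where
  "simeq G X act = Id_on (Xbar G X act) \<union> (sim_rel G X act \<union> (sim_rel G X act)\<inverse>)\<^sup>+"

definition Yset ::
  "('m, 'e) category_scheme \<Rightarrow> 'x set \<Rightarrow> ('m \<Rightarrow> 'x \<Rightarrow> 'x option) \<Rightarrow> ('m \<times> 'x) set set" where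
  "Yset G X act = Xbar G X act // simeq G X act"

definition cls ::
  "('m, 'e) category_scheme \<Rightarrow> 'x set \<Rightarrow> ('m \<Rightarrow> 'x \<Rightarrow> 'x option) \<Rightarrow> 'm \<Rightarrow> 'x \<Rightarrow> ('m \<times> 'x) set" where
  "cls G X act g x = simeq G X act `` {(g, x)}"

definition Yact ::
  "('m, 'e) category_scheme \<Rightarrow> 'x set \<Rightarrow> ('m \<Rightarrow> 'x \<Rightarrow> 'x option) \<Rightarrow>
   'm \<Rightarrow> ('m \<times> 'x) set \<Rightarrow> ('m \<times> 'x) set option" where
  "Yact G X act g c =
     (if \<exists>(h', x') \<in> c. composable G g h'
      then Some (let (h', x') = (SOME p. p \<in> c \<and> composable G g (fst p))
                 in cls G X act (Comp G g h') x')
      else None)"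

definition iota ::
  "('m, 'e) category_scheme \<Rightarrow> 'x set \<Rightarrow> ('m \<Rightarrow> 'x \<Rightarrow> 'x option) \<Rightarrow> 'x \<Rightarrow> ('m \<times> 'x) set" where
  "iota G X act x = cls G X act (SOME e. e \<in> Ob G \<and> act e x \<noteq> None) x"

end

theory Submission
  imports Defs
begin

lemma sim_inv:
  assumes cat: "is_category G" and pa: "is_partial_action G X act"
    and r: "(a, b) \<in> sim_rel G X act"
  shows "act (fst a) (snd a) = act (fst b) (snd b)"
proof -
  obtain g x g' x' where ab: "a = (g,x)" "b = (g',x')" by (cases a, cases b) auto
  from r[unfolded ab sim_rel_def] have xb: "(g,x) \<in> Xbar G X act" "(g',x') \<in> Xbar G X act"
    and c: "(\<exists>h. composable G g' h \<and> act h x \<noteq> None \<and> g = Comp G g' h \<and> act h x = Some x') \<or>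
       (x = x' \<and> g \<in> Ob G \<and> g' \<in> Ob G \<and> act g x \<noteq> None \<and> act g' x' \<noteq> None)" by auto
  have C3: "\<And>g h x y. composable G g h \<Longrightarrow> act h x = Some y \<Longrightarrow> act (Comp G g h) x = act g y"
    using pa unfolding is_partial_action_def by blast
  have C1: "\<And>x f. x \<in> X \<Longrightarrow> f \<in> Ob G \<Longrightarrow> act f x \<noteq> None \<Longrightarrow> act f x = Some x"
    using pa unfolding is_partial_action_def by blast
  have xX: "x \<in> X" using xb by (auto simp: Xbar_def)
  from c show ?thesis
  proof
    assume "\<exists>h. composable G g' h \<and> act h x \<noteq> None \<and> g = Comp G g' h \<and> act h x = Some x'"
    then obtain h where "composable G g' h" "g = Comp G g' h" "act h x = Some x'" by blast
    then show ?thesis using C3 unfolding ab by simp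
  next
    assume "x = x' \<and> g \<in> Ob G \<and> g' \<in> Ob G \<and> act g x \<noteq> None \<and> act g' x' \<noteq> None"
    then have "x = x'" "g \<in> Ob G" "g' \<in> Ob G" "act g x \<noteq> None" "act g' x' \<noteq> None" by auto
    then show ?thesis using C1[OF xX] unfolding ab by (metis fst_conv snd_conv)
  qed
qed

lemma simeq_inv:
  assumes cat: "is_category G" and pa: "is_partial_action G X act"
    and r: "(a, b) \<in> simeq G X act"
  shows "act (fst a) (snd a) = act (fst b) (snd b)"
proof -
  have "(a,b) \<in> (sim_rel G X act \<union> (sim_rel G X act)\<inverse>)\<^sup>+ \<Longrightarrow> ?thesis"
  proof (induction rule: trancl_induct)
    case (base y) then show ?case using sim_inv[OF cat pa] by (metis Un_iff converseD)
  next
    case (step y z) then show ?case using sim_inv[OF cat pa] by (metis Un_iff converseD)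
  qed
  then show ?thesis using r unfolding simeq_def by auto
qed

lemma simeq_Xbar:
  assumes r: "(a, b) \<in> simeq G X act"
  shows "a \<in> Xbar G X act \<and> b \<in> Xbar G X act"
proof -
  have "(a,b) \<in> (sim_rel G X act \<union> (sim_rel G X act)\<inverse>)\<^sup>+ \<Longrightarrow> ?thesis"
  proof (induction rule: trancl_induct)
    case (base y) then show ?case by (auto simp: sim_rel_def)
  next
    case (step y z) then show ?case by (auto simp: sim_rel_def)
  qed
  then show ?thesis using r unfolding simeq_def by (auto simp: Id_on_def)
qed

lemma Ob_props:
  assumes cat: "is_category G" and e: "e \<in> Ob G"
  shows "e \<in> Mor G" "Dom G e = e" "Cod G e = e"
  using assms unfolding Ob_def is_category_def by auto

theorem mainTheorem9:
  fixes G :: "('m, 'e) category_scheme" and X :: "'x set"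
    and act :: "'m \<Rightarrow> 'x \<Rightarrow> 'x option"
  assumes "is_category G"
    and "is_partial_action G X act"
  shows "inj_on (iota G X act) X \<and>
    (\<forall>y\<in>X. \<forall>z\<in>X. \<forall>g\<in>Mor G.
       act g y = Some z \<longleftrightarrow> Yact G X act g (iota G X act y) = Some (iota G X act z))"
proof -
  note cat = assms(1) and pa = assms(2)
  define E where "E x = (SOME e. e \<in> Ob G \<and> act e x \<noteq> None)" for x
  have E: "E x \<in> Ob G \<and> act (E x) x = Some x" if "x \<in> X" for x
  proof -
    have "\<exists>e. e \<in> Ob G \<and> act e x \<noteq> None" using pa that unfolding is_partial_action_def by blast
    then have "E x \<in> Ob G \<and> act (E x) x \<noteq> None" unfolding E_def by (rule someI_ex)
    then show ?thesis using pa that unfolding is_partial_action_def by blast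
  qed
  have iota: "iota G X act x = cls G X act (E x) x" for x unfolding iota_def E_def by simp
  have EX: "(E x, x) \<in> Xbar G X act" if "x \<in> X" for x
    using E[OF that] Ob_props[OF cat] that by (auto simp: Xbar_def)
  have self: "(E x, x) \<in> cls G X act (E x) x" if "x \<in> X" for x
    using EX[OF that] by (auto simp: cls_def simeq_def)
  have clsinv: "act a b = act (E x) x" if "(a,b) \<in> cls G X act (E x) x" for a b x
    using simeq_inv[OF cat pa, of "(E x, x)" "(a,b)"] that by (auto simp: cls_def)
  have inj: "inj_on (iota G X act) X"
  proof (rule inj_onI)
    fix x x' assume x: "x \<in> X" and x': "x' \<in> X" and eq: "iota G X act x = iota G X act x'"
    have "(E x, x) \<in> cls G X act (E x') x'" using self[OF x] eq by (simp add: iota)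
    from clsinv[OF this] E[OF x] E[OF x'] show "x = x'" by simp
  qed
  have sim_simeq: "(p, q) \<in> simeq G X act" if "(p,q) \<in> sim_rel G X act" for p q
    using that unfolding simeq_def by auto
  have simeq_trans: "(p, r) \<in> simeq G X act" if "(p,q) \<in> simeq G X act" "(q,r) \<in> simeq G X act" for p q r
    using that unfolding simeq_def by (auto simp: Id_on_def intro: trancl_trans)
  have simeq_sym: "(q, p) \<in> simeq G X act" if "(p,q) \<in> simeq G X act" for p q
  proof -
    have "(q,p) \<in> (sim_rel G X act \<union> (sim_rel G X act)\<inverse>)\<^sup>+"
      if "(p,q) \<in> (sim_rel G X act \<union> (sim_rel G X act)\<inverse>)\<^sup>+"
    proof -
      have "(p,q) \<in> ((sim_rel G X act \<union> (sim_rel G X act)\<inverse>)\<inverse>)\<^sup>+"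
        using that by (simp add: converse_Un Un_commute)
      then show ?thesis by (simp add: trancl_converse)
    qed
    then show ?thesis using that unfolding simeq_def by auto
  qed
  have cls_eq: "cls G X act a b = cls G X act c d" if "((a,b),(c,d)) \<in> simeq G X act" for a b c d
    unfolding cls_def using that simeq_trans simeq_sym by blast
  have main: "act g y = Some z \<longleftrightarrow> Yact G X act g (iota G X act y) = Some (iota G X act z)"
    if y: "y \<in> X" and z: "z \<in> X" and g: "g \<in> Mor G" for y z g
  proof
    assume gy: "act g y = Some z"
    let ?c = "cls G X act (E y) y"
    have dg: "Dom G g \<in> Ob G" using g by (auto simp: Ob_def)
    have dgy: "act (Dom G g) y \<noteq> None" using pa gy unfolding is_partial_action_def by blast
    have "((Dom G g, y), (E y, y)) \<in> sim_rel G X act"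
      using dg dgy E[OF y] EX[OF y] Ob_props[OF cat dg] y by (auto simp: sim_rel_def Xbar_def)
    then have "(Dom G g, y) \<in> ?c" using simeq_sym sim_simeq by (auto simp: cls_def)
    moreover have "composable G g (Dom G g)"
      using g Ob_props[OF cat dg] by (auto simp: composable_def)
    ultimately have ex: "\<exists>p. p \<in> ?c \<and> composable G g (fst p)" by force
    define p where "p = (SOME p. p \<in> ?c \<and> composable G g (fst p))"
    have p: "p \<in> ?c \<and> composable G g (fst p)" unfolding p_def using someI_ex[OF ex] .
    obtain h' x' where hx: "p = (h',x')" by (cases p)
    have ex2: "\<exists>(h', x') \<in> ?c. composable G g h'" using ex by auto
    have Y: "Yact G X act g ?c = Some (cls G X act (Comp G g h') x')"
      unfolding Yact_def using ex2 p_def[symmetric] hx by simp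
    have inc: "(h',x') \<in> ?c" and cp: "composable G g h'" using p hx by auto
    have hxy: "act h' x' = Some y" using clsinv[OF inc] E[OF y] by simp
    have ghx: "act (Comp G g h') x' = Some z" using pa cp hxy gy unfolding is_partial_action_def by metis
    have xbar: "(h',x') \<in> Xbar G X act" using inc simeq_Xbar unfolding cls_def by blast
    have cg: "Cod G g \<in> Mor G" using cat g unfolding is_category_def by blast
    have cgz: "act (Cod G g) z = Some z"
    proof -
      have "composable G (Cod G g) g" using cat g cg unfolding is_category_def composable_def by auto
      then have "act (Comp G (Cod G g) g) y = act (Cod G g) z" using pa gy unfolding is_partial_action_def by blast
      then show ?thesis using cat g gy unfolding is_category_def by auto
    qed
    have cgob: "Cod G g \<in> Ob G" using cat g cg unfolding is_category_def Ob_def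
      by (metis image_eqI)
    have r1: "((Comp G g h', x'), (Cod G g, z)) \<in> sim_rel G X act"
    proof -
      have "Comp G g h' \<in> Mor G" "Dom G (Comp G g h') = Dom G h'" "Cod G (Comp G g h') = Cod G g"
        using cat cp unfolding is_category_def by auto
      moreover have "Comp G (Cod G g) (Comp G g h') = Comp G g h'"
        using cat \<open>Comp G g h' \<in> Mor G\<close> \<open>Cod G (Comp G g h') = Cod G g\<close> unfolding is_category_def by metis
      moreover have "Dom G (Cod G g) = Cod G g" using Ob_props[OF cat cgob] by simp
      ultimately show ?thesis using xbar cg z cgz ghx
        by (auto simp: sim_rel_def Xbar_def composable_def intro!: exI[of _ "Comp G g h'"])
    qed
    have r2: "((Cod G g, z), (E z, z)) \<in> sim_rel G X act"
      using cgob cgz E[OF z] EX[OF z] Ob_props[OF cat cgob] z by (auto simp: sim_rel_def Xbar_def)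
    have "cls G X act (Comp G g h') x' = cls G X act (E z) z"
      using cls_eq simeq_trans[OF sim_simeq[OF r1] sim_simeq[OF r2]] by blast
    then show "Yact G X act g (iota G X act y) = Some (iota G X act z)" using Y by (simp add: iota)
  next
    assume Y0: "Yact G X act g (iota G X act y) = Some (iota G X act z)"
    let ?c = "cls G X act (E y) y"
    have ex2: "\<exists>(h', x') \<in> ?c. composable G g h'"
      using Y0 unfolding iota Yact_def by (auto split: if_splits)
    then have ex: "\<exists>p. p \<in> ?c \<and> composable G g (fst p)" by force
    define p where "p = (SOME p. p \<in> ?c \<and> composable G g (fst p))"
    have p: "p \<in> ?c \<and> composable G g (fst p)" unfolding p_def using someI_ex[OF ex] .
    obtain h' x' where hx: "p = (h',x')" by (cases p)
    have Y: "Yact G X act g ?c = Some (cls G X act (Comp G g h') x')"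
      unfolding Yact_def using ex2 p_def[symmetric] hx by simp
    have inc: "(h',x') \<in> ?c" and cp: "composable G g h'" using p hx by auto
    have hxy: "act h' x' = Some y" using clsinv[OF inc] E[OF y] by simp
    have "cls G X act (Comp G g h') x' = cls G X act (E z) z" using Y Y0 by (simp add: iota)
    moreover have "(Comp G g h', x') \<in> cls G X act (Comp G g h') x'"
    proof -
      have "Comp G g h' \<in> Mor G" "Dom G (Comp G g h') = Dom G h'"
        using cat cp unfolding is_category_def by auto
      moreover have "(h',x') \<in> Xbar G X act" using inc simeq_Xbar unfolding cls_def by blast
      ultimately show ?thesis by (auto simp: cls_def simeq_def Xbar_def)
    qed
    ultimately have "act (Comp G g h') x' = Some z" using clsinv E[OF z] by metis
    then show "act g y = Some z" using pa cp hxy unfolding is_partial_action_def by metis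
  qed
  show ?thesis using inj main by blast
qed

end
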